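(* Fix $c\neq0$. For $m\in[0,1)$, the cnoidal profile $p_{m,V}$ has zero average, $\int_0^{2\pi}p_{m,V}(x)\,dx=0$, if and only if $V=V_0(m):=\frac{2E(m)}{K(m)}-\frac{4-2m}{3}$. Let $m^*\in(0,1)$ be the solution of $E(m^* )/K(m^* )=\frac12$ ($m^*\approx0.8261$). Then the point $(m,V_0(m))$ satisfies $V_0(m)>-\frac{m+1}{3}$ for all $m\in[0,1)$, $V_0(m)=\frac{2m-1}{3}$ exactly when $m=m^*$, and $V_0(m)<\frac{2m-1}{3}$ (so that $(m,V_0(m))$ lies in the region $-\frac{m+1}{3}<V<\frac{2m-1}{3}$, where the profile is not Virasoro-conjugate to any constant) for $m\in(m^*,1)$.
   Context: $K(m)=\int_0^{\pi/2}(1-m\sin^2\theta)^{-1/2}d\theta$ and $E(m)=\int_0^{\pi/2}(1-m\sin^2\theta)^{1/2}d\theta$ are the complete elliptic integrals of the first and second kind. The cnoidal profile is $p_{m,V}(x)=\frac{cK(m)^2}{3\pi^2}\big[\frac V2-\frac{m+1}3+m\,\mathrm{sn}^2(\frac{K(m)}{\pi}x|m)\big]$ with $\mathrm{sn}(\cdot|m)$ the Jacobi elliptic sine. A $2\pi$-periodic profile $p$ is Virasoro-conjugate to a constant $k$ if $p=f\cdot k$ for some smooth $f:\mathbb{R}\to\mathbb{R}$ with $f'>0$ and $f(x+2\pi)=f(x)+2\pi$, where $(f\cdot q)(f(x))=f'(x)^{-2}[q(x)+\frac c{12}\mathsf{S}[f](x)]$ and $\mathsf{S}[f]=\frac{f'''}{f'}-\frac32(\frac{f''}{f'})^2$.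 *)

theory Defs
  imports "HOL-Analysis.Analysis"
begin

definition ellK :: "real \<Rightarrow> real" where
  "ellK m = integral {0..pi/2} (\<lambda>\<theta>. 1 / sqrt (1 - m * (sin \<theta>)^2))"

definition ellE :: "real \<Rightarrow> real" where
  "ellE m = integral {0..pi/2} (\<lambda>\<theta>. sqrt (1 - m * (sin \<theta>)^2))"

definition ellF :: "real \<Rightarrow> real \<Rightarrow> real" where
  "ellF m \<phi> = (if 0 \<le> \<phi> then integral {0..\<phi>} (\<lambda>\<theta>. 1 / sqrt (1 - m * (sin \<theta>)^2))
               else - integral {\<phi>..0} (\<lambda>\<theta>. 1 / sqrt (1 - m * (sin \<theta>)^2)))"

text \<open>Jacobi amplitude: the inverse of phi \<mapsto> F(phi|m) (a bijection of the reals for m < 1).\<close>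
definition jacobi_am :: "real \<Rightarrow> real \<Rightarrow> real" where
  "jacobi_am m u = (THE \<phi>. ellF m \<phi> = u)"

definition jacobi_sn :: "real \<Rightarrow> real \<Rightarrow> real" where
  "jacobi_sn m u = sin (jacobi_am m u)"

definition cnoidal :: "real \<Rightarrow> real \<Rightarrow> real \<Rightarrow> real \<Rightarrow> real" where
  "cnoidal c m V x = c * (ellK m)^2 / (3 * pi^2) *
     (V / 2 - (m + 1) / 3 + m * (jacobi_sn m (ellK m / pi * x))^2)"

definition V0 :: "real \<Rightarrow> real" where
  "V0 m = 2 * ellE m / ellK m - (4 - 2 * m) / 3"

end

theory Submission
  imports Defs
begin


lemma sin2_le: "(sin t)^2 \<le> (1::real)"
  using sin_squared_eq[of t] by (smt (verit) zero_le_power2)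

lemma q_pos: "(m::real) < 1 \<Longrightarrow> 0 < 1 - m * (sin t)^2"
proof -
  assume m: "m < 1"
  have s: "(sin t)^2 \<le> 1" "0 \<le> (sin t)^2" by (simp_all add: sin2_le)
  show ?thesis
  proof (cases "m \<ge> 0")
    case True
    then have "m * (sin t)^2 \<le> m" using s mult_left_le by blast
    then show ?thesis using m by linarith
  next
    case False
    then have "m * (sin t)^2 \<le> 0" using s by (simp add: mult_nonpos_nonneg)
    then show ?thesis by linarith
  qed
qed

lemma sqrtq_ne: "(m::real) < 1 \<Longrightarrow> sqrt (1 - m * (sin t)^2) \<noteq> 0"
  using q_pos[of m t] by simp

lemma w_cont: "(m::real) < 1 \<Longrightarrow> continuous_on S (\<lambda>t. 1 / sqrt (1 - m * (sin t)^2))"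
  by (intro continuous_intros ballI sqrtq_ne)

lemma sq_cont: "continuous_on S (\<lambda>t. sqrt (1 - (m::real) * (sin t)^2))"
  by (intro continuous_intros)

lemma w_ge1: "0 \<le> (m::real) \<Longrightarrow> m < 1 \<Longrightarrow> 1 \<le> 1 / sqrt (1 - m * (sin t)^2)"
proof -
  assume m: "0 \<le> m" "m < 1"
  have "0 < 1 - m * (sin t)^2" using q_pos m by blast
  moreover have "1 - m * (sin t)^2 \<le> 1" using m by simp
  ultimately have "sqrt (1 - m * (sin t)^2) \<le> 1" "0 < sqrt (1 - m * (sin t)^2)" by auto
  then show ?thesis by simp
qed

lemma sym_int:
  fixes f :: "real \<Rightarrow> real"
  assumes c: "continuous_on {0..pi} f" and s: "\<And>t. f (pi - t) = f t"
  shows "integral {0..pi} f = 2 * integral {0..pi/2} f"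
proof -
  have "((\<lambda>x. (-1) *\<^sub>R f (pi - x)) has_integral
     (integral {pi - 0..pi - pi/2} f - integral {pi - pi/2..pi - 0} f)) {0..pi/2}"
    by (rule has_integral_substitution_general[of "{}" 0 "pi/2" "\<lambda>x. pi - x" 0 pi f "\<lambda>_. -1"])
       (auto intro!: derivative_eq_intros continuous_intros c)
  then have "((\<lambda>x. - f x) has_integral (- integral {pi/2..pi} f)) {0..pi/2}"
    using s by simp
  then have "integral {0..pi/2} (\<lambda>x. - f x) = - integral {pi/2..pi} f"
    by (rule integral_unique)
  then have "integral {0..pi/2} f = integral {pi/2..pi} f"
    by (simp add: integral_neg)
  moreover have "integral {0..pi/2} f + integral {pi/2..pi} f = integral {0..pi} f"
    using Henstock_Kurzweil_Integration.integral_combine[of 0 "pi/2" pi f] c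
    by (simp add: integrable_continuous_interval)
  ultimately show ?thesis by simp
qed




definition wfn :: "real \<Rightarrow> real \<Rightarrow> real" where
  "wfn m t = 1 / sqrt (1 - m * (sin t)^2)"

lemma wf_eta: "wfn m = (\<lambda>t. 1 / sqrt (1 - m * (sin t)^2))"
  by (rule ext) (simp add: wfn_def)

lemma K_wf: "ellK m = integral {0..pi/2} (wfn m)"
  by (simp add: ellK_def wf_eta)

lemma wf_cont: "m < 1 \<Longrightarrow> continuous_on S (wfn m)"
  unfolding wfn_def by (rule w_cont)

lemma wf_int: "m < 1 \<Longrightarrow> wfn m integrable_on {a..b}"
  by (intro integrable_continuous_interval wf_cont)

lemma F_nonneg: "0 \<le> p \<Longrightarrow> ellF m p = integral {0..p} (wfn m)"
  by (simp add: ellF_def wf_eta)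

lemma int_ge_len:
  assumes "0 \<le> m" "m < 1" "a \<le> b"
  shows "integral {a..b} (wfn m) \<ge> b - a"
proof -
  have "integral {a..b} (\<lambda>_. 1::real) \<le> integral {a..b} (wfn m)"
    by (rule integral_le) (use assms wf_int w_ge1 in \<open>auto simp: wfn_def\<close>)
  then show ?thesis using assms by simp
qed

lemma F_diff:
  assumes "0 \<le> m" "m < 1" "0 \<le> a" "a \<le> b"
  shows "integral {0..b} (wfn m) - integral {0..a} (wfn m) \<ge> b - a"
proof -
  have "integral {0..a} (wfn m) + integral {a..b} (wfn m) = integral {0..b} (wfn m)"
    using Henstock_Kurzweil_Integration.integral_combine[of 0 a b "wfn m"] assms wf_int by simp
  then show ?thesis using int_ge_len[of m a b] assms by simp
qed

lemma F_neg:
  assumes "0 \<le> m" "m < 1" "p < 0"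
  shows "ellF m p < 0"
proof -
  have "ellF m p = - integral {p..0} (wfn m)" using assms by (simp add: ellF_def wf_eta)
  then show ?thesis using int_ge_len[of m p 0] assms by simp
qed

lemma am_F:
  assumes "0 \<le> m" "m < 1" "0 \<le> p"
  shows "jacobi_am m (ellF m p) = p"
  unfolding jacobi_am_def
proof (rule the_equality)
  fix q assume q: "ellF m q = ellF m p"
  show "q = p"
  proof (rule ccontr)
    assume ne: "q \<noteq> p"
    show False
    proof (cases "q < 0")
      case True
      then show ?thesis using F_neg[of m q] q assms F_nonneg[of p m] int_ge_len[of m 0 p] by simp
    next
      case False
      then have "0 \<le> q" by simp
      then show ?thesis using q ne assms F_nonneg[of p m] F_nonneg[of q m]
          F_diff[of m p q] F_diff[of m q p] by (cases "p \<le> q") auto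
    qed
  qed
qed simp

lemma F_pi:
  assumes "m < 1"
  shows "integral {0..pi} (wfn m) = 2 * ellK m"
  unfolding K_wf
  by (rule sym_int) (auto simp: wf_eta intro!: w_cont assms)




lemma K_ge: "0 \<le> m \<Longrightarrow> m < 1 \<Longrightarrow> ellK m \<ge> pi/2"
  unfolding K_wf using int_ge_len[of m 0 "pi/2"] by simp

lemma sn2_integral:
  assumes m: "0 \<le> m" "m < 1"
  shows "((\<lambda>x. (jacobi_sn m (ellK m / pi * x))^2) has_integral
           (pi / ellK m * integral {0..pi} (\<lambda>t. wfn m t * (sin t)^2))) {0..2*pi}"
proof -
  define K where "K = ellK m"
  define G where "G = (\<lambda>p. integral {0..p} (wfn m))"
  have Kpos: "K > 0" using K_ge[OF m] pi_gt_zero unfolding K_def by linarith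
  have Gd: "(G has_real_derivative wfn m t) (at t within {0..pi})" if "t \<in> {0..pi}" for t
    unfolding G_def by (rule integral_has_real_derivative) (use that wf_cont m in auto)
  have Gc: "continuous_on {0..pi} G" by (rule DERIV_continuous_on) (rule Gd)
  have G0: "G 0 = 0" by (simp add: G_def)
  have Gpi: "G pi = 2 * K" unfolding G_def K_def by (rule F_pi) (use m in simp)
  have Gmono: "G a \<le> G b" if "0 \<le> a" "a \<le> b" for a b
    using F_diff[of m a b] m that unfolding G_def by simp
  have Grange: "G ` {0..pi} = {0..2*K}"
  proof
    show "G ` {0..pi} \<subseteq> {0..2*K}"
    proof (rule image_subsetI)
      fix x assume x: "x \<in> {0..pi}"
      then have "G 0 \<le> G x" "G x \<le> G pi" using Gmono[of 0 x] Gmono[of x pi] by auto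
      then show "G x \<in> {0..2*K}" using G0 Gpi by simp
    qed
  next
    show "{0..2*K} \<subseteq> G ` {0..pi}"
    proof
      fix y assume "y \<in> {0..2*K}"
      then obtain x where "0 \<le> x" "x \<le> pi" "G x = y"
        using IVT'[of G 0 y pi] Gc G0 Gpi by auto
      then show "y \<in> G ` {0..pi}" by auto
    qed
  qed
  have amG: "jacobi_am m (G x) = x" if "0 \<le> x" for x
    using am_F[OF m that] F_nonneg[OF that, of m] unfolding G_def by simp
  have amc: "continuous_on {0..2*K} (jacobi_am m)"
    using continuous_on_inv[OF Gc compact_Icc, of "jacobi_am m"] amG Grange by auto
  have fc: "continuous_on {0..2*pi} (\<lambda>x. (sin (jacobi_am m (K / pi * x)))^2)"
  proof -
    have "continuous_on {0..2*pi} (\<lambda>x. jacobi_am m (K / pi * x))"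
      by (rule continuous_on_compose2[OF amc]) (use Kpos in \<open>auto intro!: continuous_intros simp: field_simps\<close>)
    then show ?thesis by (intro continuous_intros)
  qed
  define g where "g = (\<lambda>p. pi / K * G p)"
  have gd: "(g has_real_derivative (pi / K * wfn m t)) (at t within {0..pi})" if "t \<in> {0..pi}" for t
    unfolding g_def by (intro DERIV_cmult Gd that)
  have g0: "g 0 = 0" and gpi: "g pi = 2 * pi" using G0 Gpi Kpos by (auto simp: g_def)
  have gimg: "g ` {0..pi} \<subseteq> {0..2*pi}"
  proof (rule image_subsetI)
    fix x assume "x \<in> {0..pi}"
    then have "G x \<in> {0..2*K}" using Grange by blast
    then have "0 \<le> G x" "G x \<le> 2 * K" by auto
    then have "0 \<le> pi / K * G x" "pi / K * G x \<le> pi / K * (2 * K)"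
      using Kpos by (auto intro!: mult_left_mono simp del: times_divide_eq_left)
    then show "g x \<in> {0..2*pi}" using Kpos by (simp add: g_def)
  qed
  have "((\<lambda>t. (pi / K * wfn m t) *\<^sub>R (sin (jacobi_am m (K / pi * g t)))^2) has_integral
          integral {g 0..g pi} (\<lambda>x. (sin (jacobi_am m (K / pi * x)))^2)) {0..pi}"
    by (rule has_integral_substitution[OF _ _ gimg fc gd]) (use g0 gpi in auto)
  moreover have "(sin (jacobi_am m (K / pi * g t)))^2 = (sin t)^2" if "t \<in> {0..pi}" for t
    using amG[of t] that Kpos by (simp add: g_def)
  ultimately have "((\<lambda>t. pi / K * (wfn m t * (sin t)^2)) has_integral
          integral {0..2*pi} (\<lambda>x. (sin (jacobi_am m (K / pi * x)))^2)) {0..pi}"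
    using g0 gpi by (subst has_integral_cong[symmetric]) (auto simp: algebra_simps)
  then have "integral {0..pi} (\<lambda>t. pi / K * (wfn m t * (sin t)^2)) =
       integral {0..2*pi} (\<lambda>x. (sin (jacobi_am m (K / pi * x)))^2)"
    by (rule integral_unique)
  then have "integral {0..2*pi} (\<lambda>x. (sin (jacobi_am m (K / pi * x)))^2) =
       pi / K * integral {0..pi} (\<lambda>t. wfn m t * (sin t)^2)"
    by (metis integral_mult_right)
  moreover have "(\<lambda>x. (sin (jacobi_am m (K / pi * x)))^2) integrable_on {0..2*pi}"
    by (rule integrable_continuous_interval[OF fc])
  ultimately show ?thesis
    unfolding jacobi_sn_def K_def[symmetric] by (metis integrable_integral)
qed




lemma E_eta: "ellE m = integral {0..pi/2} (\<lambda>t. sqrt (1 - m * (sin t)^2))"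
  by (simp add: ellE_def)

lemma mws_int:
  assumes m: "m < 1"
  shows "m * integral {0..pi} (\<lambda>t. wfn m t * (sin t)^2) = 2 * (ellK m - ellE m)"
proof -
  have c: "continuous_on S (\<lambda>t. wfn m t * (sin t)^2)" for S
    by (intro continuous_intros wf_cont m)
  have "integral {0..pi} (\<lambda>t. wfn m t * (sin t)^2) = 2 * integral {0..pi/2} (\<lambda>t. wfn m t * (sin t)^2)"
    by (rule sym_int[OF c]) (simp add: wfn_def)
  moreover have "m * integral {0..pi/2} (\<lambda>t. wfn m t * (sin t)^2)
      = integral {0..pi/2} (\<lambda>t. m * (wfn m t * (sin t)^2))"
    by simp
  moreover have "(\<lambda>t. m * (wfn m t * (sin t)^2)) = (\<lambda>t. wfn m t - sqrt (1 - m * (sin t)^2))"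
  proof
    fix t
    have q: "0 < 1 - m * (sin t)^2" by (rule q_pos[OF m])
    then have "sqrt (1 - m * (sin t)^2) * sqrt (1 - m * (sin t)^2) = 1 - m * (sin t)^2" by simp
    then show "m * (wfn m t * (sin t)^2) = wfn m t - sqrt (1 - m * (sin t)^2)"
      using q unfolding wfn_def by (simp add: field_simps)
  qed
  moreover have "integral {0..pi/2} (\<lambda>t. wfn m t - sqrt (1 - m * (sin t)^2)) = ellK m - ellE m"
    unfolding K_wf E_eta
    by (rule integral_diff) (auto intro!: integrable_continuous_interval wf_cont m sq_cont)
  ultimately show ?thesis by simp
qed

lemma part1:
  assumes c: "c \<noteq> 0" and m: "0 \<le> m" "m < 1"
  shows "integral {0..2*pi} (cnoidal c m V) = 0 \<longleftrightarrow> V = V0 m"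
proof -
  define K where "K = ellK m"
  define E where "E = ellE m"
  define C where "C = c * K^2 / (3 * pi^2)"
  define A where "A = V / 2 - (m + 1) / 3"
  define I where "I = integral {0..pi} (\<lambda>t. wfn m t * (sin t)^2)"
  have Kpos: "K > 0" using K_ge[OF m] pi_gt_zero unfolding K_def by linarith
  have Cne: "C \<noteq> 0" using c Kpos by (simp add: C_def)
  have mI: "m * I = 2 * (K - E)" unfolding I_def K_def E_def by (rule mws_int[OF m(2)])
  have eq: "cnoidal c m V = (\<lambda>x. C * (A + m * (jacobi_sn m (K / pi * x))^2))"
    by (rule ext) (simp add: cnoidal_def C_def A_def K_def)
  have h1: "((\<lambda>x. A) has_integral 2 * pi * A) {0..2*pi}"
    using has_integral_const_real[of A 0 "2*pi"] by simp
  have "((\<lambda>x. C * (A + m * (jacobi_sn m (K / pi * x))^2)) has_integral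
          C * (2 * pi * A + m * (pi / K * I))) {0..2*pi}"
    by (intro has_integral_mult_right has_integral_add h1)
       (unfold I_def K_def, rule sn2_integral[OF m])
  then have "integral {0..2*pi} (cnoidal c m V) = C * (2 * pi * A + pi / K * (m * I))"
    unfolding eq by (simp add: integral_unique algebra_simps)
  also have "\<dots> = 2 * pi * C * (A + 1 - E / K)"
    using Kpos unfolding mI by (simp add: field_simps)
  finally have "integral {0..2*pi} (cnoidal c m V) = 0 \<longleftrightarrow> A + 1 - E / K = 0"
    using Cne by simp
  also have "\<dots> \<longleftrightarrow> V = V0 m"
    unfolding A_def V0_def K_def[symmetric] E_def[symmetric] by (auto simp: field_simps)
  finally show ?thesis .
qed




lemma alg1:
  fixes a b :: real
  assumes "0 < b" "b \<le> a" "a \<le> 1"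
  shows "(2*a - 1/a) - (2*b - 1/b) \<ge> a^2 - b^2"
proof -
  have a: "0 < a" using assms by linarith
  have e1: "1/b - 1/a = (a - b) / (a * b)" using a assms by (simp add: field_simps)
  have "(a - b) / (a * b) \<ge> 0" using a assms by simp
  moreover have "(a - b) * (2 - a - b) \<ge> 0" using assms by (intro mult_nonneg_nonneg) auto
  moreover have "(2*a - 1/a) - (2*b - 1/b) - (a^2 - b^2) = (a - b) * (2 - a - b) + (1/b - 1/a)"
    by (simp add: algebra_simps power2_eq_square)
  ultimately show ?thesis using e1 by linarith
qed

lemma int_sin2: "integral {0..pi/2} (\<lambda>t. (sin t)^2) = pi / 4"
proof -
  have "((\<lambda>t. (sin t)^2) has_integral ((pi/2)/2 - sin (2*(pi/2))/4 - (0/2 - sin (2*0)/4))) {0..pi/2}"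
  proof (rule fundamental_theorem_of_calculus)
    fix x :: real
    have "((\<lambda>t. t/2 - sin (2*t)/4) has_real_derivative (sin x)^2) (at x)"
    proof -
      have "((\<lambda>t. t/2 - sin (2*t)/4) has_real_derivative (1/2 - cos (2*x) * 2 / 4)) (at x)"
        by (auto intro!: derivative_eq_intros)
      moreover have "1/2 - cos (2*x) * 2 / 4 = (sin x)^2"
      proof -
        have c1: "cos (2*x) = (cos x)^2 - (sin x)^2" by (rule cos_double)
        have c2: "(sin x)^2 + (cos x)^2 = 1" by (rule sin_cos_squared_add)
        show ?thesis using c1 c2 by linarith
      qed
      ultimately show ?thesis by simp
    qed
    then show "((\<lambda>t. t/2 - sin (2*t)/4) has_vector_derivative (sin x)^2) (at x within {0..pi/2})"
      by (simp add: has_real_derivative_iff_has_vector_derivative has_vector_derivative_at_within)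
  qed simp
  then show ?thesis by (simp add: integral_unique)
qed

definition gf :: "real \<Rightarrow> real" where
  "gf m = integral {0..pi/2} (\<lambda>t. 2 * sqrt (1 - m * (sin t)^2) - 1 / sqrt (1 - m * (sin t)^2))"

lemma gf_eq: "m < 1 \<Longrightarrow> gf m = 2 * ellE m - ellK m"
  unfolding gf_def ellE_def ellK_def
  by (subst integral_diff) (auto intro!: integrable_continuous_interval continuous_intros w_cont)

lemma gf_strict:
  assumes "0 \<le> m1" "m1 < m2" "m2 < 1"
  shows "gf m2 < gf m1"
proof -
  let ?h = "\<lambda>m t. 2 * sqrt (1 - m * (sin t)^2) - 1 / sqrt (1 - m * (sin t)^2)"
  have hc: "continuous_on S (?h m)" if "m < 1" for m S
    using that by (intro continuous_intros sqrtq_ne ballI) auto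
  have pw: "?h m1 t - ?h m2 t \<ge> (m2 - m1) * (sin t)^2" for t
  proof -
    define a where "a = sqrt (1 - m1 * (sin t)^2)"
    define b where "b = sqrt (1 - m2 * (sin t)^2)"
    have s: "0 \<le> (sin t)^2" "(sin t)^2 \<le> 1" by (auto simp: sin2_le)
    have qa: "0 < 1 - m1 * (sin t)^2" and qb: "0 < 1 - m2 * (sin t)^2"
      using q_pos assms by auto
    have "m1 * (sin t)^2 \<le> m2 * (sin t)^2" using assms s by (intro mult_right_mono) auto
    then have "b \<le> a" unfolding a_def b_def by simp
    moreover have "0 < b" using qb by (simp add: b_def)
    moreover have "a \<le> 1" using assms s unfolding a_def by simp
    ultimately have "(2*a - 1/a) - (2*b - 1/b) \<ge> a^2 - b^2" by (meson alg1)
    moreover have "a^2 - b^2 = (m2 - m1) * (sin t)^2" using qa qb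
      by (simp add: a_def b_def algebra_simps)
    ultimately show ?thesis by (simp add: a_def b_def)
  qed
  have "integral {0..pi/2} (\<lambda>t. (m2 - m1) * (sin t)^2) \<le> integral {0..pi/2} (\<lambda>t. ?h m1 t - ?h m2 t)"
  proof -
    have i1: "(\<lambda>t. (m2-m1)*(sin t)^2) integrable_on {0..pi/2}"
      by (intro integrable_continuous_interval continuous_intros)
    have i2: "(\<lambda>t. ?h m1 t - ?h m2 t) integrable_on {0..pi/2}"
      by (intro integrable_diff integrable_continuous_interval hc) (use assms in auto)
    show ?thesis by (rule integral_le[OF i1 i2]) (rule pw)
  qed
  also have "\<dots> = gf m1 - gf m2" unfolding gf_def
    by (rule integral_diff) (use assms hc in \<open>auto intro!: integrable_continuous_interval\<close>)
  finally have "(m2 - m1) * (pi/4) \<le> gf m1 - gf m2" using int_sin2 by simp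
  moreover have "0 < (m2 - m1) * (pi/4)" using assms by simp
  ultimately show ?thesis by linarith
qed

lemma gf_cont: "continuous_on {..<1} gf"
proof -
  have "continuous_on {..<1} (\<lambda>m. integral (cbox 0 (pi/2))
     (\<lambda>t. 2 * sqrt (1 - m * (sin t)^2) - 1 / sqrt (1 - m * (sin t)^2)))"
  proof (rule integral_continuous_on_param)
    have "continuous_on ({..<1} \<times> cbox 0 (pi/2))
      (\<lambda>z. 2 * sqrt (1 - fst z * (sin (snd z))^2) - 1 / sqrt (1 - fst z * (sin (snd z))^2))"
      by (intro continuous_intros ballI sqrtq_ne) auto
    then show "continuous_on ({..<1} \<times> cbox 0 (pi/2))
      (\<lambda>(m, t). 2 * sqrt (1 - m * (sin t)^2) - 1 / sqrt (1 - m * (sin t)^2))"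
      by (simp add: case_prod_beta')
  qed
  then show ?thesis unfolding gf_def by simp
qed




lemma E_le: assumes "0 \<le> m" "m < 1" shows "ellE m \<le> pi/2"
proof -
  have "integral {0..pi/2} (\<lambda>t. sqrt (1 - m * (sin t)^2)) \<le> integral {0..pi/2} (\<lambda>t. 1::real)"
    by (rule integral_le) (use assms in \<open>auto intro!: integrable_continuous_interval continuous_intros
        simp: mult_nonneg_nonneg\<close>)
  then show ?thesis by (simp add: ellE_def)
qed

lemma E_ge: assumes "0 \<le> m" "m < 1" shows "ellE m \<ge> (1 - m) * ellK m"
proof -
  have "integral {0..pi/2} (\<lambda>t. (1 - m) * wfn m t) \<le> integral {0..pi/2} (\<lambda>t. sqrt (1 - m * (sin t)^2))"
  proof (rule integral_le)
    show "(\<lambda>t. (1 - m) * wfn m t) integrable_on {0..pi/2}"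
      by (intro integrable_continuous_interval continuous_intros wf_cont assms)
    show "(\<lambda>t. sqrt (1 - m * (sin t)^2)) integrable_on {0..pi/2}"
      by (intro integrable_continuous_interval continuous_intros)
    fix t
    have q: "0 < 1 - m * (sin t)^2" using q_pos assms by auto
    have "m * (sin t)^2 \<le> m" using assms sin2_le[of t] by (simp add: mult_left_le)
    then have "1 - m \<le> 1 - m * (sin t)^2" by simp
    also have "\<dots> = sqrt (1 - m * (sin t)^2) * sqrt (1 - m * (sin t)^2)" using q by simp
    finally show "(1 - m) * wfn m t \<le> sqrt (1 - m * (sin t)^2)"
      using q unfolding wfn_def by (simp add: divide_simps)
  qed
  then show ?thesis by (simp add: ellE_def K_wf)
qed



lemma ln_big: "ln (19999::real) > 9"
proof -
  have "exp (9::real) = exp 1 ^ 9" using exp_of_nat_mult[of 9 "1::real"] by simp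
  also have "\<dots> \<le> 3 ^ 9" by (rule power_mono[OF exp_le]) simp
  finally have "exp (9::real) < 19999" by simp
  then have "exp 9 < exp (ln (19999::real))" by simp
  then show ?thesis by (simp only: exp_less_cancel_iff)
qed

lemma sqrt_div_self: "0 < (Q::real) \<Longrightarrow> sqrt Q / Q = 1 / sqrt Q"
proof -
  assume Q: "0 < Q"
  then have "sqrt Q * sqrt Q = Q" by simp
  then show ?thesis using Q by (simp add: field_simps)
qed

lemma K_big:
  defines "r \<equiv> (9999/10000::real)"
  shows "ellK (r^2) > pi"
proof -
  have r: "0 < r" "r < 1" by (auto simp: r_def)
  define P where "P = (\<lambda>t. (ln (1 + r * sin t) - ln (1 - r * sin t)) / (2 * r))"
  have d: "(P has_real_derivative cos x / (1 - r^2 * (sin x)^2)) (at x)" for x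
  proof -
    have s: "\<bar>sin x\<bar> \<le> 1" by (rule abs_sin_le_one)
    have "\<bar>r * sin x\<bar> = r * \<bar>sin x\<bar>" using r by (simp add: abs_mult)
    moreover have "r * \<bar>sin x\<bar> \<le> r * 1" by (rule mult_left_mono) (use s r in auto)
    ultimately have "\<bar>r * sin x\<bar> < 1" using r by linarith
    then have p1: "0 < 1 + r * sin x" and p2: "0 < 1 - r * sin x" by auto
    have "(1 + r * sin x) * (1 - r * sin x) = 1 - r^2 * (sin x)^2" by (simp add: algebra_simps power2_eq_square)
    then have p3: "1 - r^2 * (sin x)^2 > 0" using p1 p2 by (metis mult_pos_pos)
    show ?thesis
      unfolding P_def using p1 p2 p3 r
      by (auto intro!: derivative_eq_intros simp: field_simps power2_eq_square)
  qed
  have "((\<lambda>t. cos t / (1 - r^2 * (sin t)^2)) has_integral (P (pi/2) - P 0)) {0..pi/2}"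
    by (rule fundamental_theorem_of_calculus)
       (auto simp: has_real_derivative_iff_has_vector_derivative[symmetric] intro!: has_field_derivative_at_within d)
  moreover have "P (pi/2) - P 0 = ln 19999 / (2 * r)"
  proof -
    have L: "ln (19999/10000::real) - ln (1/10000) = ln 19999" by (simp add: ln_div)
    have "P (pi/2) - P 0 = (ln (19999/10000) - ln (1/10000)) / (2*r)"
      unfolding P_def by (simp add: r_def)
    then show ?thesis using L by simp
  qed
  ultimately have I: "integral {0..pi/2} (\<lambda>t. cos t / (1 - r^2 * (sin t)^2)) = ln 19999 / (2 * r)"
    by (simp add: integral_unique)
  have "integral {0..pi/2} (\<lambda>t. cos t / (1 - r^2 * (sin t)^2)) \<le> integral {0..pi/2} (wfn (r^2))"
  proof (rule integral_le)
    have m: "r^2 < 1" by (simp add: r_def power2_eq_square)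
    show "(\<lambda>t. cos t / (1 - r^2 * (sin t)^2)) integrable_on {0..pi/2}"
      by (intro integrable_continuous_interval continuous_intros ballI)
         (metis q_pos[OF m] less_irrefl)
    show "wfn (r^2) integrable_on {0..pi/2}" by (rule wf_int[OF m])
    fix t assume t: "t \<in> {0..pi/2}"
    have q: "0 < 1 - r^2 * (sin t)^2" using q_pos m by auto
    have c0: "0 \<le> cos t" using t by (auto intro: cos_ge_zero)
    have "(cos t)^2 \<le> 1 - r^2 * (sin t)^2"
    proof -
      have "r^2 * (sin t)^2 \<le> 1 * (sin t)^2" by (rule mult_right_mono) (use m in auto)
      then show ?thesis using sin_cos_squared_add[of t] by linarith
    qed
    then have "cos t \<le> sqrt (1 - r^2 * (sin t)^2)" using c0 real_le_rsqrt by blast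
    then have "cos t / (1 - r^2 * (sin t)^2) \<le> sqrt (1 - r^2 * (sin t)^2) / (1 - r^2 * (sin t)^2)"
      using q by (simp add: divide_right_mono)
    also have "\<dots> = wfn (r^2) t" unfolding wfn_def using q by (rule sqrt_div_self)
    finally show "cos t / (1 - r^2 * (sin t)^2) \<le> wfn (r^2) t" .
  qed
  then have "ln 19999 / (2 * r) \<le> ellK (r^2)" using I by (simp add: K_wf)
  moreover have "ln 19999 / (2 * r) > 9 / 2" using ln_big r
    by (simp add: r_def field_simps)
  moreover have "pi < 9/2" using pi_less_4 by simp
  ultimately show ?thesis by linarith
qed




lemma Kpos: "0 \<le> m \<Longrightarrow> m < 1 \<Longrightarrow> ellK m > 0"
  using K_ge[of m] pi_gt_zero by linarith

lemma V0_gf: "0 \<le> m \<Longrightarrow> m < 1 \<Longrightarrow> V0 m - (2 * m - 1) / 3 = gf m / ellK m"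
proof -
  assume m: "0 \<le> m" "m < 1"
  have aux: "X - (4 - 2 * m) / 3 - (2 * m - 1) / 3 = X - 1" for X :: real by (simp add: field_simps)
  have "V0 m - (2 * m - 1) / 3 = 2 * ellE m / ellK m - 1" unfolding V0_def by (rule aux)
  also have "\<dots> = (2 * ellE m - ellK m) / ellK m" using Kpos[OF m] by (simp add: field_simps)
  finally show ?thesis using gf_eq[of m] m by simp
qed

lemma ratio_gf: "0 \<le> m \<Longrightarrow> m < 1 \<Longrightarrow> (ellE m / ellK m = 1/2 \<longleftrightarrow> gf m = 0)"
  using Kpos[of m] gf_eq[of m] by (auto simp: field_simps)

lemma gf0: "gf 0 > 0"
  unfolding gf_def by simp

lemma gf_neg: "gf ((9999/10000)^2) < 0"
proof -
  define m :: real where "m = (9999/10000)^2"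
  have m: "0 \<le> m" "m < 1" by (auto simp: m_def power2_eq_square)
  have "gf m = 2 * ellE m - ellK m" using gf_eq m by simp
  then show ?thesis using E_le[OF m] K_big unfolding m_def by simp
qed

lemma gf_inj: "0 \<le> a \<Longrightarrow> a < 1 \<Longrightarrow> 0 \<le> b \<Longrightarrow> b < 1 \<Longrightarrow> gf a = gf b \<Longrightarrow> a = b"
  using gf_strict[of a b] gf_strict[of b a] by (cases a b rule: linorder_cases) auto

theorem mainTheorem8:
  fixes c :: real
  assumes "c \<noteq> 0"
  shows "(\<forall>m V. 0 \<le> m \<and> m < 1 \<longrightarrow>
            (integral {0..2*pi} (cnoidal c m V) = 0 \<longleftrightarrow> V = V0 m))
       \<and> (\<exists>!ms. 0 < ms \<and> ms < 1 \<and> ellE ms / ellK ms = 1/2)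
       \<and> (\<forall>m. 0 \<le> m \<and> m < 1 \<longrightarrow> V0 m > - (m + 1) / 3)
       \<and> (\<forall>ms. 0 < ms \<and> ms < 1 \<and> ellE ms / ellK ms = 1/2 \<longrightarrow>
            (\<forall>m. 0 \<le> m \<and> m < 1 \<longrightarrow> (V0 m = (2 * m - 1) / 3 \<longleftrightarrow> m = ms))
          \<and> (\<forall>m. ms < m \<and> m < 1 \<longrightarrow> V0 m < (2 * m - 1) / 3))"
proof (intro conjI allI impI)
  fix m V :: real assume "0 \<le> m \<and> m < 1"
  then show "integral {0..2*pi} (cnoidal c m V) = 0 \<longleftrightarrow> V = V0 m"
    using part1[OF assms] by blast
next
  define b :: real where "b = (9999/10000)^2"
  have b: "0 < b" "b < 1" by (auto simp: b_def power2_eq_square)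
  have "continuous_on {0..b} gf" by (rule continuous_on_subset[OF gf_cont]) (use b in auto)
  then obtain x where x: "0 \<le> x" "x \<le> b" "gf x = 0"
    using IVT2'[of gf b 0 0] gf0 gf_neg b unfolding b_def by auto
  have "x \<noteq> 0" using x gf0 by auto
  moreover have "x \<noteq> b" using x gf_neg unfolding b_def by auto
  ultimately have x2: "0 < x" "x < 1" using x b by auto
  show "\<exists>!ms. 0 < ms \<and> ms < 1 \<and> ellE ms / ellK ms = 1/2"
  proof (rule ex1I[of _ x])
    show "0 < x \<and> x < 1 \<and> ellE x / ellK x = 1/2" using x2 x ratio_gf by auto
  next
    fix y assume "0 < y \<and> y < 1 \<and> ellE y / ellK y = 1/2"
    then show "y = x" using x2 x ratio_gf[of y] gf_inj[of y x] by auto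
  qed
next
  fix m :: real assume m: "0 \<le> m \<and> m < 1"
  have K: "ellK m > 0" using Kpos m by auto
  have E: "ellE m \<ge> (1 - m) * ellK m" using E_ge m by auto
  have "(1 - m) * ellK m > 0" using K m by simp
  then have "2 * ellE m > (1 - m) * ellK m" using E by linarith
  then have "2 * ellE m / ellK m > 1 - m" using K by (simp add: field_simps)
  moreover have aux: "1 - m < X \<Longrightarrow> - (m + 1) / 3 < X - (4 - 2 * m) / 3" for X :: real
    by (simp add: field_simps)
  ultimately show "V0 m > - (m + 1) / 3" unfolding V0_def by blast
next
  fix ms m :: real
  assume ms: "0 < ms \<and> ms < 1 \<and> ellE ms / ellK ms = 1/2" and m: "0 \<le> m \<and> m < 1"
  have g: "gf ms = 0" using ms ratio_gf[of ms] by auto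
  have "V0 m = (2 * m - 1) / 3 \<longleftrightarrow> V0 m - (2 * m - 1) / 3 = 0"
    by (rule right_minus_eq[symmetric])
  also have "\<dots> \<longleftrightarrow> gf m / ellK m = 0" using V0_gf[of m] m by simp
  also have "\<dots> \<longleftrightarrow> gf m = 0" using Kpos[of m] m by simp
  also have "\<dots> \<longleftrightarrow> m = ms" using g gf_inj[of m ms] m ms by auto
  finally show "V0 m = (2 * m - 1) / 3 \<longleftrightarrow> m = ms" .
next
  fix ms m :: real
  assume ms: "0 < ms \<and> ms < 1 \<and> ellE ms / ellK ms = 1/2" and m: "ms < m \<and> m < 1"
  have g: "gf ms = 0" using ms ratio_gf[of ms] by auto
  have "gf m < 0" using gf_strict[of ms m] g ms m by auto
  moreover have "ellK m > 0" using Kpos[of m] m ms by auto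
  ultimately have "gf m / ellK m < 0" by (simp add: divide_neg_pos)
  moreover have "V0 m - (2 * m - 1) / 3 = gf m / ellK m" using V0_gf[of m] m ms by auto
  ultimately show "V0 m < (2 * m - 1) / 3" by linarith
qed


end
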